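(* Consider problem (VP) under the standing assumptions at $\bar x\in Q_0$. Let $\bar x$ be a local weak efficient solution of (VP) (in particular, a local efficient solution), let $u\in\mathcal{C}(\bar x)$, and suppose $L^2(Q;\bar x,u)\subset T^2(Q_0;\bar x,u)$. Then there is no $v\in X$ such that $f_i^{\circ}(\bar x,v)+f_i^{\circ\circ}(\bar x,u)<0$ for all $i\in I(\bar x;u)$ and $g_j^{\circ}(\bar x,v)+g_j^{\circ\circ}(\bar x,u)\leqq0$ for all $j\in J(\bar x;u)$.
   Context: Standing setting: $X$ is a Banach space; $I=\{1,\dots,p\}$, $J=\{1,\dots,m\}$; $f_i,g_j\colon X\to\mathbb{R}$; (VP) minimizes $f=(f_1,\dots,f_p)$ over $Q_0:=\{x\in X: g_j(x)\leqq 0,\ j\in J\}$. $J(\bar x):=\{j\in J: g_j(\bar x)=0\}$. Standing assumptions: $f_i$ ($i\in I$), $g_j$ ($j\in J(\bar x)$) locally Lipschitz at $\bar x$; $g_j$ ($j\notin J(\bar x)$) continuous at $\bar x$. $F^{\circ}(\bar x,u):=\limsup_{x\to\bar x,\,t\downarrow0}\frac{F(x+tu)-F(x)}{t}$; $F^{\circ\circ}(\bar x,u):=\limsup_{t\downarrow0}\frac{F(\bar x+tu)-F(\bar x)-tF^{\circ}(\bar x,u)}{\frac12t^2}$. $I(\bar x;u):=\{i\in I: f_i^{\circ}(\bar x,u)=0\}$, $J(\bar x;u):=\{j\in J(\bar x): g_j^{\circ}(\bar x,u)=0\}$. Lexicographic order on $\mathbb{R}^2$: $a\leqq_{\rm lex}b$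 iff $a_1<b_1$ or ($a_1=b_1$, $a_2\leqq b_2$). $F_i^2(\bar x;u,v):=(f_i^{\circ}(\bar x,u),\, f_i^{\circ}(\bar x,v)+f_i^{\circ\circ}(\bar x,u))$, $G_j^2(\bar x;u,v):=(g_j^{\circ}(\bar x,u),\, g_j^{\circ}(\bar x,v)+g_j^{\circ\circ}(\bar x,u))$. $Q:=Q_0\cap\{x: f_i(x)\leqq f_i(\bar x),\ i\in I\}$; $L^2(Q;\bar x,u):=\{v: F_i^2(\bar x;u,v)\leqq_{\rm lex}(0,0)\ \forall i\in I,\ G_j^2(\bar x;u,v)\leqq_{\rm lex}(0,0)\ \forall j\in J(\bar x)\}$. $T^2(\Omega;\bar x,u):=\{v: \exists t_k\downarrow0,\ \exists v^k\to v,\ \bar x+t_ku+\frac12t_k^2v^k\in\Omega\ \forall k\}$. Critical direction: $u$ with $f_i^{\circ}(\bar x,u)\leqq0$ for all $i$, $=0$ for some $i$, and $g_j^{\circ}(\bar x,u)\leqq0$ for all $j\in J(\bar x)$; $\mathcal{C}(\bar x)$ is the set of these. Local weak efficient solution: a neighborhood $U$ of $\bar x$ exists such that no $x\in U\cap Q_0$ has $f_i(x)<f_i(\bar x)$ for all $i\in I$. *)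

theory Defs
  imports "HOL-Analysis.Analysis" "HOL-Library.Extended_Real"
begin

definition clarke_dd :: "('a::real_normed_vector \<Rightarrow> real) \<Rightarrow> 'a \<Rightarrow> 'a \<Rightarrow> ereal" where
  "clarke_dd F xb u =
     Limsup (nhds xb \<times>\<^sub>F at_right 0) (\<lambda>(x, t). ereal ((F (x + t *\<^sub>R u) - F x) / t))"

definition clarke_dd2 :: "('a::real_normed_vector \<Rightarrow> real) \<Rightarrow> 'a \<Rightarrow> 'a \<Rightarrow> ereal" where
  "clarke_dd2 F xb u =
     Limsup (at_right 0)
       (\<lambda>t. (ereal (F (xb + t *\<^sub>R u) - F xb) - ereal t * clarke_dd F xb u) / ereal (t\<^sup>2 / 2))"

definition lex_le :: "ereal \<times> ereal \<Rightarrow> ereal \<times> ereal \<Rightarrow> bool" where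
  "lex_le a b \<longleftrightarrow> fst a < fst b \<or> (fst a = fst b \<and> snd a \<le> snd b)"

definition second_pair :: "('a::real_normed_vector \<Rightarrow> real) \<Rightarrow> 'a \<Rightarrow> 'a \<Rightarrow> 'a \<Rightarrow> ereal \<times> ereal" where
  "second_pair F xb u v = (clarke_dd F xb u, clarke_dd F xb v + clarke_dd2 F xb u)"

definition locally_lipschitz_at :: "('a::metric_space \<Rightarrow> real) \<Rightarrow> 'a \<Rightarrow> bool" where
  "locally_lipschitz_at F xb \<longleftrightarrow>
     (\<exists>L \<delta>. \<delta> > 0 \<and> (\<forall>y\<in>ball xb \<delta>. \<forall>z\<in>ball xb \<delta>. \<bar>F y - F z\<bar> \<le> L * dist y z))"

definition feasible_set :: "nat \<Rightarrow> (nat \<Rightarrow> 'a \<Rightarrow> real) \<Rightarrow> 'a set" where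
  "feasible_set m g = {x. \<forall>j\<in>{1..m}. g j x \<le> 0}"

definition active_set :: "nat \<Rightarrow> (nat \<Rightarrow> 'a \<Rightarrow> real) \<Rightarrow> 'a \<Rightarrow> nat set" where
  "active_set m g xb = {j\<in>{1..m}. g j xb = 0}"

definition level_set :: "nat \<Rightarrow> (nat \<Rightarrow> 'a \<Rightarrow> real) \<Rightarrow> nat \<Rightarrow> (nat \<Rightarrow> 'a \<Rightarrow> real) \<Rightarrow> 'a \<Rightarrow> 'a set" where
  "level_set p f m g xb = feasible_set m g \<inter> {x. \<forall>i\<in>{1..p}. f i x \<le> f i xb}"

definition I_u :: "nat \<Rightarrow> (nat \<Rightarrow> 'a::real_normed_vector \<Rightarrow> real) \<Rightarrow> 'a \<Rightarrow> 'a \<Rightarrow> nat set" where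
  "I_u p f xb u = {i\<in>{1..p}. clarke_dd (f i) xb u = 0}"

definition J_u :: "nat \<Rightarrow> (nat \<Rightarrow> 'a::real_normed_vector \<Rightarrow> real) \<Rightarrow> 'a \<Rightarrow> 'a \<Rightarrow> nat set" where
  "J_u m g xb u = {j\<in>active_set m g xb. clarke_dd (g j) xb u = 0}"

definition L2_set :: "nat \<Rightarrow> (nat \<Rightarrow> 'a::real_normed_vector \<Rightarrow> real) \<Rightarrow> nat \<Rightarrow> (nat \<Rightarrow> 'a \<Rightarrow> real) \<Rightarrow> 'a \<Rightarrow> 'a \<Rightarrow> 'a set" where
  "L2_set p f m g xb u =
     {v. (\<forall>i\<in>{1..p}. lex_le (second_pair (f i) xb u v) (0, 0)) \<and>
         (\<forall>j\<in>active_set m g xb. lex_le (second_pair (g j) xb u v) (0, 0))}"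

definition T2_set :: "'a::real_normed_vector set \<Rightarrow> 'a \<Rightarrow> 'a \<Rightarrow> 'a set" where
  "T2_set \<Omega> xb u =
     {v. \<exists>(t::nat \<Rightarrow> real) (w::nat \<Rightarrow> 'a). (\<forall>k. t k > 0) \<and> t \<longlonglongrightarrow> 0 \<and> w \<longlonglongrightarrow> v \<and>
          (\<forall>k. xb + t k *\<^sub>R u + ((1/2) * (t k)\<^sup>2) *\<^sub>R w k \<in> \<Omega>)}"

definition critical_dir :: "nat \<Rightarrow> (nat \<Rightarrow> 'a::real_normed_vector \<Rightarrow> real) \<Rightarrow> nat \<Rightarrow> (nat \<Rightarrow> 'a \<Rightarrow> real) \<Rightarrow> 'a \<Rightarrow> 'a \<Rightarrow> bool" where
  "critical_dir p f m g xb u \<longleftrightarrow>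
     (\<forall>i\<in>{1..p}. clarke_dd (f i) xb u \<le> 0) \<and> (\<exists>i\<in>{1..p}. clarke_dd (f i) xb u = 0) \<and>
     (\<forall>j\<in>active_set m g xb. clarke_dd (g j) xb u \<le> 0)"

definition local_weak_efficient :: "nat \<Rightarrow> (nat \<Rightarrow> 'a::topological_space \<Rightarrow> real) \<Rightarrow> nat \<Rightarrow> (nat \<Rightarrow> 'a \<Rightarrow> real) \<Rightarrow> 'a \<Rightarrow> bool" where
  "local_weak_efficient p f m g xb \<longleftrightarrow>
     (\<exists>U. open U \<and> xb \<in> U \<and> \<not> (\<exists>x\<in>U \<inter> feasible_set m g. \<forall>i\<in>{1..p}. f i x < f i xb))"

end

theory Submission
  imports Defs
begin

lemma clarke_seq:
  fixes F :: "'a::real_normed_vector \<Rightarrow> real"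
  assumes "clarke_dd F xb d < ereal a" "y \<longlonglongrightarrow> xb" "s \<longlonglongrightarrow> 0" "\<forall>k. s k > 0"
  shows "eventually (\<lambda>k. F (y k + s k *\<^sub>R d) - F (y k) < a * s k) sequentially"
proof -
  have ev: "eventually (\<lambda>(x,t). ereal ((F (x + t *\<^sub>R d) - F x)/t) < ereal a) (nhds xb \<times>\<^sub>F at_right 0)"
    using Limsup_lessD[OF assms(1)[unfolded clarke_dd_def]] by (simp only: case_prod_unfold)
  have lim: "filterlim (\<lambda>k. (y k, s k)) (nhds xb \<times>\<^sub>F at_right 0) sequentially"
    by (intro filterlim_Pair assms(2) tendsto_imp_filterlim_at_right assms(3)) (use assms(4) in auto)
  have "eventually (\<lambda>k. ereal ((F (y k + s k *\<^sub>R d) - F (y k))/s k) < ereal a) sequentially"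
    using filterlim_iff[THEN iffD1, OF lim, rule_format, OF ev] by simp
  then show ?thesis
  proof eventually_elim
    case (elim k)
    with assms(4) show ?case by (simp add: divide_less_eq mult.commute)
  qed
qed

lemma clarke2_seq:
  fixes F :: "'a::real_normed_vector \<Rightarrow> real"
  assumes "clarke_dd2 F xb u < ereal b" "clarke_dd F xb u = 0" "t \<longlonglongrightarrow> 0" "\<forall>k. t k > 0"
  shows "eventually (\<lambda>k. F (xb + t k *\<^sub>R u) - F xb < b * ((1/2) * (t k)\<^sup>2)) sequentially"
proof -
  have ev: "eventually (\<lambda>t. (ereal (F (xb + t *\<^sub>R u) - F xb) - ereal t * clarke_dd F xb u) / ereal (t\<^sup>2 / 2) < ereal b) (at_right 0)"
    using Limsup_lessD[OF assms(1)[unfolded clarke_dd2_def]] by simp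
  have lim: "filterlim t (at_right 0) sequentially"
    by (intro tendsto_imp_filterlim_at_right assms(3)) (use assms(4) in auto)
  have "eventually (\<lambda>k. (ereal (F (xb + t k *\<^sub>R u) - F xb) - ereal (t k) * clarke_dd F xb u) / ereal ((t k)\<^sup>2 / 2) < ereal b) sequentially"
    using filterlim_iff[THEN iffD1, OF lim, rule_format, OF ev] by simp
  then show ?thesis
  proof eventually_elim
    case (elim k)
    have tp: "t k > 0" using assms(4) by auto
    then have "(t k)\<^sup>2 / 2 \<noteq> 0" by simp
    with elim assms(2) have "(F (xb + t k *\<^sub>R u) - F xb) / ((t k)\<^sup>2 / 2) < b" by simp
    with tp show ?case by (simp add: divide_less_eq mult.commute)
  qed
qed

lemma ereal_sum_neg:
  fixes a b :: ereal
  assumes "a + b < 0"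
  shows "\<exists>a' b'. a < ereal a' \<and> b < ereal b' \<and> a' + b' < 0"
proof (cases a)
  case (real x)
  show ?thesis
  proof (cases b)
    case (real y)
    with \<open>a = ereal x\<close> assms have "x + y < 0" by simp
    then show ?thesis using \<open>a = ereal x\<close> real
      by (intro exI[of _ "x - (x+y)/4"] exI[of _ "y - (x+y)/4"]) auto
  next
    case PInf with real assms show ?thesis by simp
  next
    case MInf with real show ?thesis by (intro exI[of _ "x+1"] exI[of _ "-x-2"]) auto
  qed
next
  case PInf with assms show ?thesis by simp
next
  case MInf
  show ?thesis
  proof (cases b)
    case (real y)
    with MInf show ?thesis by (intro exI[of _ "-y-2"] exI[of _ "y+1"]) auto
  next
    case PInf with MInf assms show ?thesis by simp
  next
    case MInf with \<open>a = -\<infinity>\<close> show ?thesis by (intro exI[of _ "-1"] exI[of _ "-1"]) auto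
  qed
qed


lemma lip_ball:
  assumes "y \<longlonglongrightarrow> xb" "\<delta> > 0"
  shows "eventually (\<lambda>k. y k \<in> ball xb \<delta>) sequentially"
  using assms tendsto_iff[THEN iffD1, OF assms(1)] by (auto simp: dist_commute)

lemma key_I:
  fixes F :: "'a::real_normed_vector \<Rightarrow> real"
  assumes lip: "locally_lipschitz_at F xb" and d0: "clarke_dd F xb u = 0"
    and sum: "clarke_dd F xb v + clarke_dd2 F xb u < 0"
    and tp: "\<forall>k. t k > 0" and t0: "t \<longlonglongrightarrow> 0" and wv: "w \<longlonglongrightarrow> v"
  shows "eventually (\<lambda>k. F (xb + t k *\<^sub>R u + ((1/2) * (t k)\<^sup>2) *\<^sub>R w k) < F xb) sequentially"
proof -
  obtain a' b' where ab: "clarke_dd F xb v < ereal a'" "clarke_dd2 F xb u < ereal b'" "a' + b' < 0"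
    using ereal_sum_neg[OF sum] by blast
  obtain L \<delta> where L: "\<delta> > 0" "\<forall>y\<in>ball xb \<delta>. \<forall>z\<in>ball xb \<delta>. \<bar>F y - F z\<bar> \<le> L * dist y z"
    using lip unfolding locally_lipschitz_at_def by blast
  define s where "s k = (1/2) * (t k)\<^sup>2" for k
  define y where "y k = xb + t k *\<^sub>R u" for k
  have s0: "s \<longlonglongrightarrow> 0" unfolding s_def using t0 by (auto intro!: tendsto_eq_intros)
  have sp: "\<forall>k. s k > 0" unfolding s_def using tp by (metis less_numeral_extra(1) mult_pos_pos zero_less_divide_iff zero_less_numeral zero_less_power)
  have y0: "y \<longlonglongrightarrow> xb" unfolding y_def using t0 by (auto intro!: tendsto_eq_intros)
  have E1: "eventually (\<lambda>k. F (y k + s k *\<^sub>R v) - F (y k) < a' * s k) sequentially"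
    by (rule clarke_seq[OF ab(1) y0 s0 sp])
  have E2: "eventually (\<lambda>k. F (y k) - F xb < b' * s k) sequentially"
    using clarke2_seq[OF ab(2) d0 t0 tp] by (simp add: y_def s_def)
  have "(\<lambda>k. L * norm (w k - v)) \<longlonglongrightarrow> L * norm (v - v)"
    using wv by (intro tendsto_intros)
  then have E3: "eventually (\<lambda>k. L * norm (w k - v) < -(a'+b')) sequentially"
    using ab(3) by (intro order_tendstoD(2)) auto
  have E4: "eventually (\<lambda>k. y k + s k *\<^sub>R w k \<in> ball xb \<delta>) sequentially"
    using L(1) y0 s0 wv by (intro lip_ball) (auto intro!: tendsto_eq_intros)
  have E5: "eventually (\<lambda>k. y k + s k *\<^sub>R v \<in> ball xb \<delta>) sequentially"
    using L(1) y0 s0 by (intro lip_ball) (auto intro!: tendsto_eq_intros)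
  from E1 E2 E3 E4 E5 have "eventually (\<lambda>k. F (y k + s k *\<^sub>R w k) < F xb) sequentially"
  proof eventually_elim
    case (elim k)
    have "dist (y k + s k *\<^sub>R w k) (y k + s k *\<^sub>R v) = s k * norm (w k - v)"
      using sp[rule_format, of k] by (simp add: dist_norm scaleR_diff_right[symmetric])
    with L(2) elim(4,5) have "F (y k + s k *\<^sub>R w k) - F (y k + s k *\<^sub>R v) \<le> L * (s k * norm (w k - v))"
      by fastforce
    moreover have "s k * (L * norm (w k - v) + (a' + b')) < 0"
      using sp elim(3) by (intro mult_pos_neg) auto
    ultimately show ?case using elim(1,2) by (simp add: algebra_simps)
  qed
  then show ?thesis by (simp add: y_def s_def)
qed

lemma key_notI:
  fixes F :: "'a::real_normed_vector \<Rightarrow> real"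
  assumes lip: "locally_lipschitz_at F xb" and dneg: "clarke_dd F xb u < 0"
    and tp: "\<forall>k. t k > 0" and t0: "t \<longlonglongrightarrow> 0" and wv: "w \<longlonglongrightarrow> v"
  shows "eventually (\<lambda>k. F (xb + t k *\<^sub>R u + ((1/2) * (t k)\<^sup>2) *\<^sub>R w k) < F xb) sequentially"
proof -
  obtain c where c: "clarke_dd F xb u < ereal c" "c < 0"
  proof (cases "clarke_dd F xb u")
    case (real x) then show ?thesis using dneg that[of "x/2"] by auto
  next
    case PInf then show ?thesis using dneg by simp
  next
    case MInf then show ?thesis using that[of "-1"] by auto
  qed
  obtain L \<delta> where L: "\<delta> > 0" "\<forall>y\<in>ball xb \<delta>. \<forall>z\<in>ball xb \<delta>. \<bar>F y - F z\<bar> \<le> L * dist y z"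
    using lip unfolding locally_lipschitz_at_def by blast
  define s where "s k = (1/2) * (t k)\<^sup>2" for k
  define y where "y k = xb + t k *\<^sub>R u" for k
  have s0: "s \<longlonglongrightarrow> 0" unfolding s_def using t0 by (auto intro!: tendsto_eq_intros)
  have y0: "y \<longlonglongrightarrow> xb" unfolding y_def using t0 by (auto intro!: tendsto_eq_intros)
  have E1: "eventually (\<lambda>k. F (xb + t k *\<^sub>R u) - F xb < c * t k) sequentially"
    by (rule clarke_seq[OF c(1) tendsto_const t0 tp])
  have "(\<lambda>k. L * ((1/2) * t k * norm (w k))) \<longlonglongrightarrow> 0"
    using wv t0 by (auto intro!: tendsto_eq_intros)
  from order_tendstoD(2)[OF this, of "-c"] c(2)
  have E3: "eventually (\<lambda>k. L * ((1/2) * t k * norm (w k)) < -c) sequentially"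
    by simp
  have E4: "eventually (\<lambda>k. y k + s k *\<^sub>R w k \<in> ball xb \<delta>) sequentially"
    using L(1) y0 s0 wv by (intro lip_ball) (auto intro!: tendsto_eq_intros)
  have E5: "eventually (\<lambda>k. y k \<in> ball xb \<delta>) sequentially"
    using L(1) y0 by (intro lip_ball) auto
  from E1 E3 E4 E5 have "eventually (\<lambda>k. F (y k + s k *\<^sub>R w k) < F xb) sequentially"
  proof eventually_elim
    case (elim k)
    have "dist (y k + s k *\<^sub>R w k) (y k) = t k * ((1/2) * t k * norm (w k))"
      using tp by (simp add: dist_norm s_def power2_eq_square)
    with L(2) elim(3,4) have "F (y k + s k *\<^sub>R w k) - F (y k) \<le> t k * (L * ((1/2) * t k * norm (w k)))"
      by (metis abs_le_D1 mult.left_commute)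
    moreover have "t k * (L * ((1/2) * t k * norm (w k)) + c) < 0"
      using tp elim(2) by (intro mult_pos_neg) auto
    ultimately show ?case using elim(1) by (simp add: algebra_simps y_def)
  qed
  then show ?thesis by (simp add: y_def s_def)
qed

theorem corollary4p3:
  fixes p m :: nat
    and f g :: "nat \<Rightarrow> 'a::banach \<Rightarrow> real"
    and xb u :: 'a
  assumes feas: "xb \<in> feasible_set m g"
    and lip_f: "\<forall>i\<in>{1..p}. locally_lipschitz_at (f i) xb"
    and lip_g: "\<forall>j\<in>active_set m g xb. locally_lipschitz_at (g j) xb"
    and cont_g: "\<forall>j\<in>{1..m} - active_set m g xb. isCont (g j) xb"
    and opt: "local_weak_efficient p f m g xb"
    and crit: "critical_dir p f m g xb u"
    and cq: "L2_set p f m g xb u \<subseteq> T2_set (feasible_set m g) xb u"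
  shows "\<not> (\<exists>v. (\<forall>i\<in>I_u p f xb u. clarke_dd (f i) xb v + clarke_dd2 (f i) xb u < 0) \<and>
              (\<forall>j\<in>J_u m g xb u. clarke_dd (g j) xb v + clarke_dd2 (g j) xb u \<le> 0))"
proof
  assume "\<exists>v. (\<forall>i\<in>I_u p f xb u. clarke_dd (f i) xb v + clarke_dd2 (f i) xb u < 0) \<and>
              (\<forall>j\<in>J_u m g xb u. clarke_dd (g j) xb v + clarke_dd2 (g j) xb u \<le> 0)"
  then obtain v where vI: "\<forall>i\<in>I_u p f xb u. clarke_dd (f i) xb v + clarke_dd2 (f i) xb u < 0"
    and vJ: "\<forall>j\<in>J_u m g xb u. clarke_dd (g j) xb v + clarke_dd2 (g j) xb u \<le> 0" by blast
  have "v \<in> L2_set p f m g xb u"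
    unfolding L2_set_def
  proof safe
    fix i assume i: "i \<in> {1..p}"
    show "lex_le (second_pair (f i) xb u v) (0, 0)"
    proof (cases "clarke_dd (f i) xb u = 0")
      case True
      then have "i \<in> I_u p f xb u" using i by (simp add: I_u_def)
      then show ?thesis using vI True by (auto simp: lex_le_def second_pair_def)
    next
      case False
      then show ?thesis using crit i by (auto simp: lex_le_def second_pair_def critical_dir_def order.order_iff_strict)
    qed
  next
    fix j assume j: "j \<in> active_set m g xb"
    show "lex_le (second_pair (g j) xb u v) (0, 0)"
    proof (cases "clarke_dd (g j) xb u = 0")
      case True
      then have "j \<in> J_u m g xb u" using j by (simp add: J_u_def)
      then show ?thesis using vJ True by (auto simp: lex_le_def second_pair_def)
    next
      case False
      then show ?thesis using crit j by (auto simp: lex_le_def second_pair_def critical_dir_def order.order_iff_strict)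
    qed
  qed
  with cq obtain t w where tw: "\<forall>k. t k > 0" "t \<longlonglongrightarrow> 0" "w \<longlonglongrightarrow> v"
    "\<forall>k. xb + t k *\<^sub>R u + ((1/2) * (t k)\<^sup>2) *\<^sub>R w k \<in> feasible_set m g"
    unfolding T2_set_def by blast
  obtain U where U: "open U" "xb \<in> U"
    "\<not> (\<exists>x\<in>U \<inter> feasible_set m g. \<forall>i\<in>{1..p}. f i x < f i xb)"
    using opt unfolding local_weak_efficient_def by blast
  define x where "x k = xb + t k *\<^sub>R u + ((1/2) * (t k)\<^sup>2) *\<^sub>R w k" for k
  have "x \<longlonglongrightarrow> xb + 0 *\<^sub>R u + ((1/2) * 0\<^sup>2) *\<^sub>R v"
    unfolding x_def using tw by (intro tendsto_intros)
  then have "x \<longlonglongrightarrow> xb" by simp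
  then have EU: "eventually (\<lambda>k. x k \<in> U) sequentially"
    using U by (simp add: topological_tendstoD)
  have "\<forall>i\<in>{1..p}. eventually (\<lambda>k. f i (x k) < f i xb) sequentially"
  proof
    fix i assume i: "i \<in> {1..p}"
    show "eventually (\<lambda>k. f i (x k) < f i xb) sequentially"
    proof (cases "clarke_dd (f i) xb u = 0")
      case True
      then have "i \<in> I_u p f xb u" using i by (simp add: I_u_def)
      then show ?thesis unfolding x_def
        using key_I[OF _ True _ tw(1,2,3)] lip_f i vI by blast
    next
      case False
      then have "clarke_dd (f i) xb u < 0" using crit i by (auto simp: critical_dir_def order.order_iff_strict)
      then show ?thesis unfolding x_def
        using key_notI[OF _ _ tw(1,2,3)] lip_f i by blast
    qed
  qed
  then have "eventually (\<lambda>k. \<forall>i\<in>{1..p}. f i (x k) < f i xb) sequentially"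
    by (intro eventually_ball_finite) auto
  with EU have "eventually (\<lambda>k. x k \<in> U \<and> (\<forall>i\<in>{1..p}. f i (x k) < f i xb)) sequentially"
    by (rule eventually_conj)
  then obtain k where "x k \<in> U" "\<forall>i\<in>{1..p}. f i (x k) < f i xb"
    unfolding eventually_sequentially by blast
  moreover have "x k \<in> feasible_set m g" using tw(4) by (simp add: x_def)
  ultimately show False using U(3) by blast
qed

end
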